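(* Let $\mathcal{S}$ be a free abelian group of infinite rank, in the signature $(+,-,0)$, and let $I$ be the set of subgroups $A\le\mathcal{S}$ of finite rank which are direct summands of $\mathcal{S}$ (there is $C\le\mathcal{S}$ with $\mathcal{S}=A\oplus C$), ordered by inclusion. Then $\lim_I\mathrm{Th}(A^* )=\mathrm{Th}(\mathcal{S}^* )$, where $A$ ranges over $I$.
   Context: For a structure $\mathcal{T}$ with universe $T$, $\mathrm{Th}(\mathcal{T}^* )$ is the set of sentences in $(+,-,0)$ expanded by a constant for each element of $T$ that are true in $\mathcal{T}$; these are regarded as subsets of the set of sentences with constants from the universe of $\mathcal{S}$. For a family $\{\Delta_i\}_{i\in I}$ indexed by a directed set: $\limsup_I \Delta_i=\{\theta: \forall i\ \exists j\ge i\ [\theta\in\Delta_j]\}$, $\liminf_I \Delta_i=\{\theta: \exists i\ \forall j\ge i\ [\theta\in\Delta_j]\}$, and $\lim_I\Delta_i=\Delta$ means both equal $\Delta$. *)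

theory Defs
  imports Main
begin

definition zsc :: "int \<Rightarrow> 'a::ab_group_add \<Rightarrow> 'a" where
  "zsc n x = (if 0 \<le> n then (\<Sum>i<nat n. x) else - (\<Sum>i<nat (- n). x))"

definition free_basis :: "'a::ab_group_add set \<Rightarrow> bool" where
  "free_basis B \<longleftrightarrow>
     (\<forall>x. \<exists>!c::'a \<Rightarrow> int. finite {b. c b \<noteq> 0} \<and> (\<forall>b. b \<notin> B \<longrightarrow> c b = 0) \<and>
            x = (\<Sum>b\<in>{b. c b \<noteq> 0}. zsc (c b) b))"

definition free_abelian_infinite_rank :: "'a::ab_group_add itself \<Rightarrow> bool" where
  "free_abelian_infinite_rank _ \<longleftrightarrow> (\<exists>B::'a set. free_basis B \<and> infinite B)"

definition subgrp :: "'a::ab_group_add set \<Rightarrow> bool" where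
  "subgrp A \<longleftrightarrow> 0 \<in> A \<and> (\<forall>x\<in>A. \<forall>y\<in>A. x + y \<in> A) \<and> (\<forall>x\<in>A. - x \<in> A)"

definition z_independent :: "'a::ab_group_add set \<Rightarrow> bool" where
  "z_independent F \<longleftrightarrow> finite F \<and>
     (\<forall>c::'a \<Rightarrow> int. (\<Sum>b\<in>F. zsc (c b) b) = 0 \<longrightarrow> (\<forall>b\<in>F. c b = 0))"

definition finite_rank :: "'a::ab_group_add set \<Rightarrow> bool" where
  "finite_rank A \<longleftrightarrow> (\<exists>n::nat. \<forall>F. F \<subseteq> A \<longrightarrow> z_independent F \<longrightarrow> card F \<le> n)"

definition direct_summand :: "'a::ab_group_add set \<Rightarrow> bool" where
  "direct_summand A \<longleftrightarrow> (\<exists>C. subgrp C \<and> A \<inter> C = {0} \<and>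
        (\<forall>x. \<exists>a\<in>A. \<exists>c\<in>C. x = a + c))"

datatype 'a tm = Var nat | Cst 'a | Zero | Plus "'a tm" "'a tm" | Minus "'a tm"

datatype 'a fm = Eq "'a tm" "'a tm" | FFalse | Neg "'a fm" | Conj "'a fm" "'a fm"
  | Disj "'a fm" "'a fm" | Imp "'a fm" "'a fm" | Ex nat "'a fm" | All nat "'a fm"

primrec tm_vars :: "'a tm \<Rightarrow> nat set" where
  "tm_vars (Var n) = {n}" | "tm_vars (Cst c) = {}" | "tm_vars Zero = {}"
| "tm_vars (Plus s t) = tm_vars s \<union> tm_vars t" | "tm_vars (Minus t) = tm_vars t"

primrec tm_consts :: "'a tm \<Rightarrow> 'a set" where
  "tm_consts (Var n) = {}" | "tm_consts (Cst c) = {c}" | "tm_consts Zero = {}"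
| "tm_consts (Plus s t) = tm_consts s \<union> tm_consts t" | "tm_consts (Minus t) = tm_consts t"

primrec fvars :: "'a fm \<Rightarrow> nat set" where
  "fvars (Eq s t) = tm_vars s \<union> tm_vars t" | "fvars FFalse = {}"
| "fvars (Neg p) = fvars p" | "fvars (Conj p q) = fvars p \<union> fvars q"
| "fvars (Disj p q) = fvars p \<union> fvars q" | "fvars (Imp p q) = fvars p \<union> fvars q"
| "fvars (Ex n p) = fvars p - {n}" | "fvars (All n p) = fvars p - {n}"

primrec fconsts :: "'a fm \<Rightarrow> 'a set" where
  "fconsts (Eq s t) = tm_consts s \<union> tm_consts t" | "fconsts FFalse = {}"
| "fconsts (Neg p) = fconsts p" | "fconsts (Conj p q) = fconsts p \<union> fconsts q"
| "fconsts (Disj p q) = fconsts p \<union> fconsts q" | "fconsts (Imp p q) = fconsts p \<union> fconsts q"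
| "fconsts (Ex n p) = fconsts p" | "fconsts (All n p) = fconsts p"

primrec tm_eval :: "(nat \<Rightarrow> 'a) \<Rightarrow> 'a tm \<Rightarrow> 'a::ab_group_add" where
  "tm_eval e (Var n) = e n" | "tm_eval e (Cst c) = c" | "tm_eval e Zero = 0"
| "tm_eval e (Plus s t) = tm_eval e s + tm_eval e t" | "tm_eval e (Minus t) = - tm_eval e t"

primrec sat :: "'a::ab_group_add set \<Rightarrow> (nat \<Rightarrow> 'a) \<Rightarrow> 'a fm \<Rightarrow> bool" where
  "sat A e (Eq s t) = (tm_eval e s = tm_eval e t)" | "sat A e FFalse = False"
| "sat A e (Neg p) = (\<not> sat A e p)" | "sat A e (Conj p q) = (sat A e p \<and> sat A e q)"
| "sat A e (Disj p q) = (sat A e p \<or> sat A e q)" | "sat A e (Imp p q) = (sat A e p \<longrightarrow> sat A e q)"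
| "sat A e (Ex n p) = (\<exists>a\<in>A. sat A (e(n := a)) p)"
| "sat A e (All n p) = (\<forall>a\<in>A. sat A (e(n := a)) p)"

text \<open>Th(A^*): sentences with constants from A true in the substructure A.
  The environment is irrelevant for sentences; we use the constant 0 environment.\<close>
definition Th :: "'a::ab_group_add set \<Rightarrow> 'a fm set" where
  "Th A = {\<phi>. fvars \<phi> = {} \<and> fconsts \<phi> \<subseteq> A \<and> sat A (\<lambda>_. 0) \<phi>}"

definition limsup_I :: "'i set set \<Rightarrow> ('i set \<Rightarrow> 'b set) \<Rightarrow> 'b set" where
  "limsup_I I D = {\<theta>. \<forall>i\<in>I. \<exists>j\<in>I. i \<subseteq> j \<and> \<theta> \<in> D j}"

definition liminf_I :: "'i set set \<Rightarrow> ('i set \<Rightarrow> 'b set) \<Rightarrow> 'b set" where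
  "liminf_I I D = {\<theta>. \<exists>i\<in>I. \<forall>j\<in>I. i \<subseteq> j \<longrightarrow> \<theta> \<in> D j}"

definition has_lim_I :: "'i set set \<Rightarrow> ('i set \<Rightarrow> 'b set) \<Rightarrow> 'b set \<Rightarrow> bool" where
  "has_lim_I I D L \<longleftrightarrow> limsup_I I D = L \<and> liminf_I I D = L"

end

theory Submission
  imports Defs
begin


lemma zsc_0[simp]: "zsc 0 x = 0" by (simp add: zsc_def)

lemma zsc_succ: "zsc (n + 1) x = zsc n x + x"
proof (cases "0 \<le> n")
  case True
  then have "nat (n+1) = Suc (nat n)" by simp
  then show ?thesis using True by (simp add: zsc_def add.commute)
next
  case False
  then have "nat (-n) = Suc (nat (- (n+1)))" by simp
  then show ?thesis using False by (auto simp add: zsc_def add.commute)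
qed

lemma zsc_pred: "zsc (n - 1) x = zsc n x - x"
  using zsc_succ[of "n - 1" x] by simp

lemma zsc_add: "zsc (m + n) x = zsc m x + zsc n x"
proof (induction n rule: int_induct[where k=0])
  case base then show ?case by simp
next
  case (step1 i) then show ?case using zsc_succ[of "m+i" x] zsc_succ[of i x] by (simp add: add.assoc)
next
  case (step2 i) then show ?case using zsc_pred[of "m+i" x] zsc_pred[of i x] by (simp add: diff_add_eq add_diff_eq)
qed

lemma zsc_1[simp]: "zsc 1 x = x" using zsc_succ[of 0 x] by simp

lemma zsc_neg: "zsc (- n) x = - zsc n x"
  using zsc_add[of "-n" n x] by (simp add: eq_neg_iff_add_eq_0)

lemma zsc_add_right: "zsc n (x + y) = zsc n x + zsc n y"
proof (induction n rule: int_induct[where k=0])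
  case base then show ?case by simp
next
  case (step1 i) then show ?case by (simp only: zsc_succ) (simp add: algebra_simps)
next
  case (step2 i) then show ?case by (simp only: zsc_pred) (simp add: algebra_simps)
qed

lemma zsc_zero_right[simp]: "zsc n 0 = 0"
  using zsc_add_right[of n 0 0] by simp

definition hom :: "('a::ab_group_add \<Rightarrow> int) \<Rightarrow> bool" where
  "hom f \<longleftrightarrow> (\<forall>x y. f (x + y) = f x + f y)"

lemma hom_0: "hom f \<Longrightarrow> f 0 = 0"
  unfolding hom_def by (drule spec[of _ 0], drule spec[of _ 0]) simp

lemma hom_neg: "hom f \<Longrightarrow> f (- x) = - f x"
proof -
  assume h: "hom f"
  have "f (x + - x) = f x + f (- x)" using h unfolding hom_def by blast
  then show ?thesis using hom_0[OF h] by simp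
qed

lemma hom_add: "hom f \<Longrightarrow> f (x + y) = f x + f y" unfolding hom_def by blast

lemma hom_diff: "hom f \<Longrightarrow> f (x - y) = f x - f y"
  using hom_add[of f x "- y"] hom_neg[of f y] by simp

lemma hom_zsc: "hom f \<Longrightarrow> f (zsc n x) = n * f x"
proof (induction n rule: int_induct[where k=0])
  case base then show ?case by (simp add: hom_0)
next
  case (step1 i) then show ?case by (simp only: zsc_succ hom_add) (simp add: algebra_simps)
next
  case (step2 i) then show ?case by (simp only: zsc_pred hom_diff) (simp add: algebra_simps)
qed

lemma hom_sum: "hom f \<Longrightarrow> f (sum g T) = (\<Sum>t\<in>T. f (g t))"
  by (induction T rule: infinite_finite_induct) (auto simp: hom_0 hom_add)


lemma subgrp_diff: "subgrp X \<Longrightarrow> x \<in> X \<Longrightarrow> y \<in> X \<Longrightarrow> x - y \<in> X"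
  unfolding subgrp_def by (metis diff_conv_add_uminus)

lemma subgrp_zsc: "subgrp X \<Longrightarrow> x \<in> X \<Longrightarrow> zsc n x \<in> X"
proof (induction n rule: int_induct[where k=0])
  case base then show ?case by (simp add: subgrp_def)
next
  case (step1 i) then show ?case unfolding zsc_succ subgrp_def by blast
next
  case (step2 i) then show ?case unfolding zsc_pred using subgrp_diff by blast
qed

lemma subgrp_sum: "subgrp X \<Longrightarrow> (\<And>t. t \<in> T \<Longrightarrow> g t \<in> X) \<Longrightarrow> sum g T \<in> X"
proof (induction T rule: infinite_finite_induct)
  case (insert x F) then show ?case unfolding subgrp_def by simp
qed (auto simp: subgrp_def)



locale fb =
  fixes B :: "'a::ab_group_add set"
  assumes fb: "free_basis B"
begin

definition rep :: "'a \<Rightarrow> ('a \<Rightarrow> int) \<Rightarrow> bool" where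
  "rep x c \<longleftrightarrow> finite {b. c b \<noteq> 0} \<and> (\<forall>b. b \<notin> B \<longrightarrow> c b = 0) \<and>
            x = (\<Sum>b\<in>{b. c b \<noteq> 0}. zsc (c b) b)"

definition cf :: "'a \<Rightarrow> 'a \<Rightarrow> int" where "cf x = (THE c. rep x c)"

lemma ex1_rep: "\<exists>!c. rep x c" using fb unfolding free_basis_def rep_def by blast

lemma rep_cf: "rep x (cf x)" unfolding cf_def using ex1_rep by (rule theI')

lemma rep_unique: "rep x c \<Longrightarrow> c = cf x" using ex1_rep rep_cf by blast

lemma cf_finite: "finite {b. cf x b \<noteq> 0}" using rep_cf unfolding rep_def by blast
lemma cf_B: "b \<notin> B \<Longrightarrow> cf x b = 0" using rep_cf unfolding rep_def by blast
lemma cf_sum0: "x = (\<Sum>b\<in>{b. cf x b \<noteq> 0}. zsc (cf x b) b)" using rep_cf unfolding rep_def by blast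

lemma cf_sumT: assumes "finite T" "{b. cf x b \<noteq> 0} \<subseteq> T"
  shows "x = (\<Sum>b\<in>T. zsc (cf x b) b)"
proof -
  have "(\<Sum>b\<in>T. zsc (cf x b) b) = (\<Sum>b\<in>{b. cf x b \<noteq> 0}. zsc (cf x b) b)"
    by (rule sum.mono_neutral_right) (use assms in auto)
  then show ?thesis using cf_sum0 by simp
qed

lemma cf_eqI: assumes "finite T" "\<And>b. c b \<noteq> 0 \<Longrightarrow> b \<in> T" "\<And>b. b \<notin> B \<Longrightarrow> c b = 0"
   "x = (\<Sum>b\<in>T. zsc (c b) b)"
  shows "cf x = c"
proof -
  have "(\<Sum>b\<in>T. zsc (c b) b) = (\<Sum>b\<in>{b. c b \<noteq> 0}. zsc (c b) b)"
    by (rule sum.mono_neutral_right) (use assms in auto)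
  moreover have "finite {b. c b \<noteq> 0}" by (rule finite_subset[OF _ assms(1)]) (use assms(2) in blast)
  ultimately have "rep x c" unfolding rep_def using assms(3,4) by simp
  then show ?thesis using rep_unique by simp
qed

lemma cf_inj: assumes "cf x = cf y" shows "x = y"
proof -
  have "x = (\<Sum>b\<in>{b. cf x b \<noteq> 0}. zsc (cf x b) b)" by (rule cf_sum0)
  also have "\<dots> = (\<Sum>b\<in>{b. cf y b \<noteq> 0}. zsc (cf y b) b)" unfolding assms ..
  also have "\<dots> = y" by (rule cf_sum0[symmetric])
  finally show ?thesis .
qed

lemma cf_add: "cf (x + y) = (\<lambda>b. cf x b + cf y b)"
proof (rule cf_eqI[where T="{b. cf x b \<noteq> 0} \<union> {b. cf y b \<noteq> 0}"])
  show "finite ({b. cf x b \<noteq> 0} \<union> {b. cf y b \<noteq> 0})" using cf_finite by auto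
  define T where "T = {b. cf x b \<noteq> 0} \<union> {b. cf y b \<noteq> 0}"
  have fT: "finite T" using cf_finite by (auto simp: T_def)
  have hx: "x = (\<Sum>b\<in>T. zsc (cf x b) b)" by (rule cf_sumT[OF fT]) (auto simp: T_def)
  have hy: "y = (\<Sum>b\<in>T. zsc (cf y b) b)" by (rule cf_sumT[OF fT]) (auto simp: T_def)
  have "x + y = (\<Sum>b\<in>T. zsc (cf x b) b) + (\<Sum>b\<in>T. zsc (cf y b) b)"
    by (rule arg_cong2[where f="(+)", OF hx hy])
  also have "\<dots> = (\<Sum>b\<in>T. zsc (cf x b + cf y b) b)"
    by (simp only: zsc_add sum.distrib)
  finally show "x + y = (\<Sum>b\<in>{b. cf x b \<noteq> 0} \<union> {b. cf y b \<noteq> 0}. zsc (cf x b + cf y b) b)"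
    by (simp only: T_def)
qed (auto simp: cf_B)

lemma hom_cf: "hom (\<lambda>x. cf x b)" unfolding hom_def by (simp add: cf_add)

lemma cf_zero: "cf 0 b = 0" using hom_0[OF hom_cf] by simp
lemma cf_neg: "cf (-x) b = - cf x b" using hom_neg[OF hom_cf] by simp
lemma cf_diff: "cf (x - y) b = cf x b - cf y b" using hom_diff[OF hom_cf] by simp
lemma cf_zsc: "cf (zsc n x) b = n * cf x b" using hom_zsc[OF hom_cf] by simp
lemma cf_sum: "cf (sum g T) b = (\<Sum>t\<in>T. cf (g t) b)" using hom_sum[OF hom_cf] by simp

lemma cf_basis: assumes "a \<in> B" shows "cf a b = (if b = a then 1 else 0)"
proof -
  have "cf a = (\<lambda>b. if b = a then 1 else 0)"
    by (rule cf_eqI[where T="{a}"]) (use assms in \<open>auto split: if_splits\<close>)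
  then show ?thesis by simp
qed

lemma cf_lincomb: assumes "finite T" "T \<subseteq> B"
  shows "cf (\<Sum>t\<in>T. zsc (k t) t) b = (if b \<in> T then k b else 0)"
proof -
  have "cf (\<Sum>t\<in>T. zsc (k t) t) b = (\<Sum>t\<in>T. k t * (if b = t then 1 else 0))"
    using assms by (simp add: cf_sum cf_zsc cf_basis subsetD)
  also have "\<dots> = (\<Sum>t\<in>T. if b = t then k t else 0)"
    by (rule sum.cong) auto
  also have "\<dots> = (if b \<in> T then k b else 0)"
    using assms(1) by (simp add: sum.delta)
  finally show ?thesis .
qed

lemma cf_eq0: assumes "\<And>b. cf x b = 0" shows "x = 0"
proof (rule cf_inj)
  show "cf x = cf 0" using assms cf_zero by (intro ext) simp
qed

lemma torsion_free: fixes x :: 'a assumes "zsc m x = 0" "m \<noteq> 0" shows "x = 0"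
proof -
  have "cf x b = 0" for b
  proof -
    have "m * cf x b = 0" using cf_zsc[of m x b] assms(1) cf_zero by simp
    then show "cf x b = 0" using assms(2) by simp
  qed
  then show ?thesis by (rule cf_eq0)
qed

end


lemma int_dependence:
  fixes v :: "'i \<Rightarrow> 'j \<Rightarrow> int"
  assumes "finite J" "finite I" "card J < card I"
  shows "\<exists>n. (\<exists>i\<in>I. n i \<noteq> 0) \<and> (\<forall>j\<in>J. (\<Sum>i\<in>I. n i * v i j) = 0)"
  using assms
proof (induction J arbitrary: I v rule: finite_induct)
  case empty
  then have "I \<noteq> {}" by auto
  then show ?case by (rule_tac x="\<lambda>_. 1" in exI) auto
next
  case (insert j0 J)
  show ?case
  proof (cases "\<forall>i\<in>I. v i j0 = 0")
    case True
    from insert have "card J < card I" by simp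
    from insert.IH[OF insert.prems(1) this] obtain n where
      "(\<exists>i\<in>I. n i \<noteq> 0)" "(\<forall>j\<in>J. (\<Sum>i\<in>I. n i * v i j) = 0)" by blast
    then show ?thesis using True by (rule_tac x=n in exI) auto
  next
    case False
    then obtain i0 where i0: "i0 \<in> I" "v i0 j0 \<noteq> 0" by blast
    define a where "a = v i0 j0"
    define I' where "I' = I - {i0}"
    define w where "w i j = a * v i j - v i j0 * v i0 j" for i j
    have "card J < card I'" using insert i0 by (simp add: I'_def)
    moreover have "finite I'" using insert by (simp add: I'_def)
    ultimately obtain m where m: "\<exists>i\<in>I'. m i \<noteq> 0" "\<forall>j\<in>J. (\<Sum>i\<in>I'. m i * w i j) = 0"
      using insert.IH by blast
    define n where "n i = (if i = i0 then - (\<Sum>k\<in>I'. m k * v k j0) else a * m i)" for i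
    have split: "(\<Sum>i\<in>I. n i * v i j) = n i0 * v i0 j + (\<Sum>i\<in>I'. a * m i * v i j)" for j
    proof -
      have "(\<Sum>i\<in>I. n i * v i j) = n i0 * v i0 j + (\<Sum>i\<in>I'. n i * v i j)"
        unfolding I'_def using i0 insert.prems by (simp add: sum.remove)
      also have "(\<Sum>i\<in>I'. n i * v i j) = (\<Sum>i\<in>I'. a * m i * v i j)"
        by (rule sum.cong) (auto simp: n_def I'_def)
      finally show ?thesis .
    qed
    have "\<forall>j\<in>insert j0 J. (\<Sum>i\<in>I. n i * v i j) = 0"
    proof
      fix j assume "j \<in> insert j0 J"
      then consider "j = j0" | "j \<in> J" by blast
      then show "(\<Sum>i\<in>I. n i * v i j) = 0"
      proof cases
        case 1
        then show ?thesis unfolding split by (simp add: n_def a_def sum_distrib_left algebra_simps)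
      next
        case 2
        have e1: "(\<Sum>i\<in>I'. m i * w i j) = (\<Sum>i\<in>I'. a * m i * v i j) - (\<Sum>i\<in>I'. m i * (v i j0 * v i0 j))"
          unfolding w_def by (subst sum_subtractf[symmetric], rule sum.cong, simp, simp add: algebra_simps)
        have e2: "(\<Sum>k\<in>I'. m k * v k j0) * v i0 j = (\<Sum>i\<in>I'. m i * (v i j0 * v i0 j))"
          by (simp add: sum_distrib_right mult.assoc)
        show ?thesis unfolding split using m(2) 2 e1 e2 by (simp add: n_def)
      qed
    qed
    moreover have "\<exists>i\<in>I. n i \<noteq> 0" using m(1) i0 by (auto simp: n_def I'_def a_def)
    ultimately show ?thesis by blast
  qed
qed

lemma gcd_bezout_set:
  fixes v :: "'b \<Rightarrow> int"
  assumes "finite T"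
  shows "\<exists>u. (\<Sum>b\<in>T. u b * v b) = Gcd (v ` T)"
  using assms
proof (induction T rule: finite_induct)
  case empty then show ?case by simp
next
  case (insert x T)
  then obtain u where u: "(\<Sum>b\<in>T. u b * v b) = Gcd (v ` T)" by blast
  obtain s t where st: "s * v x + t * Gcd (v ` T) = gcd (v x) (Gcd (v ` T))"
    using bezout_int by blast
  define u' where "u' b = (if b = x then s else t * u b)" for b
  have "(\<Sum>b\<in>T. u' b * v b) = (\<Sum>b\<in>T. t * (u b * v b))"
    by (rule sum.cong) (use insert in \<open>auto simp: u'_def\<close>)
  then have "(\<Sum>b\<in>insert x T. u' b * v b) = s * v x + (\<Sum>b\<in>T. t * (u b * v b))"
    using insert by (simp add: u'_def)
  also have "\<dots> = gcd (v x) (Gcd (v ` T))" using u st by (simp add: sum_distrib_left[symmetric])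
  finally show ?case by (rule_tac x=u' in exI) simp
qed

context fb begin

lemma core:
  fixes c :: 'a
  assumes "c \<noteq> 0"
  shows "\<exists>m e \<mu>. m \<noteq> 0 \<and> c = zsc m e \<and> hom \<mu> \<and> \<mu> e = 1"
proof -
  define T where "T = {b. cf c b \<noteq> 0}"
  have fT: "finite T" using cf_finite T_def by simp
  have TB: "T \<subseteq> B" using cf_B T_def by auto
  obtain b0 where b0: "cf c b0 \<noteq> 0" using assms cf_eq0 by blast
  define g where "g = Gcd (cf c ` T)"
  obtain u where u: "(\<Sum>b\<in>T. u b * cf c b) = g" using gcd_bezout_set[OF fT] g_def by blast
  have gdvd: "g dvd cf c b" for b
    by (cases "b \<in> T") (auto simp: g_def T_def intro: Gcd_dvd)
  have g0: "g \<noteq> 0" using gdvd[of b0] b0 by auto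
  define e where "e = (\<Sum>b\<in>T. zsc (cf c b div g) b)"
  define \<mu> where "\<mu> x = (\<Sum>b\<in>T. u b * cf x b)" for x
  have cfe: "cf e b = (if b \<in> T then cf c b div g else 0)" for b
    unfolding e_def using cf_lincomb[OF fT TB] by simp
  have "cf (zsc g e) = cf c"
  proof
    fix b show "cf (zsc g e) b = cf c b"
      using gdvd[of b] by (auto simp: cf_zsc cfe T_def)
  qed
  then have ce: "c = zsc g e" using cf_inj by metis
  have hm: "hom \<mu>" unfolding hom_def \<mu>_def by (simp add: cf_add sum.distrib algebra_simps)
  have me: "\<mu> e = (\<Sum>b\<in>T. u b * (cf c b div g))"
    unfolding \<mu>_def by (rule sum.cong) (simp_all add: cfe)
  have "g * \<mu> e = (\<Sum>b\<in>T. u b * (g * (cf c b div g)))"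
    unfolding me by (simp add: sum_distrib_left mult.left_commute)
  also have "\<dots> = (\<Sum>b\<in>T. u b * cf c b)"
    by (rule sum.cong) (simp_all add: gdvd)
  also have "\<dots> = g" using u by simp
  finally have "\<mu> e = 1" using g0 by simp
  then show ?thesis using g0 ce hm by blast
qed

definition spanB :: "'a set \<Rightarrow> 'a set" where
  "spanB F = {x. \<forall>b. cf x b \<noteq> 0 \<longrightarrow> b \<in> F}"

lemma subgrp_spanB: "subgrp (spanB F)"
  unfolding subgrp_def spanB_def
proof (intro conjI ballI CollectI allI impI)
  fix x y b assume "x \<in> {x. \<forall>b. cf x b \<noteq> 0 \<longrightarrow> b \<in> F}" "y \<in> {x. \<forall>b. cf x b \<noteq> 0 \<longrightarrow> b \<in> F}"
    "cf (x + y) b \<noteq> 0"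
  then show "b \<in> F"
  proof (rule_tac ccontr)
    assume nb: "b \<notin> F"
    have "cf x b = 0" "cf y b = 0" using \<open>x \<in> _\<close> \<open>y \<in> _\<close> nb by blast+
    then show False using \<open>cf (x + y) b \<noteq> 0\<close> by (simp add: cf_add)
  qed
qed (auto simp: cf_zero cf_neg)

lemma spanB_mono: "F \<subseteq> F' \<Longrightarrow> spanB F \<subseteq> spanB F'"
  unfolding spanB_def by auto

lemma spanB_basis: "F \<subseteq> B \<Longrightarrow> F \<subseteq> spanB F"
  unfolding spanB_def using cf_basis by (auto split: if_splits)

lemma summand_spanB: assumes "finite F" "F \<subseteq> B" shows "direct_summand (spanB F)"
  unfolding direct_summand_def
proof (intro exI conjI allI)
  let ?C = "{x. \<forall>b\<in>F. cf x b = 0}"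
  show "subgrp ?C" unfolding subgrp_def by (auto simp: cf_zero cf_add cf_neg)
  show "spanB F \<inter> ?C = {0}"
  proof
    show "spanB F \<inter> ?C \<subseteq> {0}"
    proof
      fix y assume y: "y \<in> spanB F \<inter> ?C"
      have "cf y b = 0" for b
      proof (cases "b \<in> F")
        case True then show ?thesis using y by blast
      next
        case False then show ?thesis using y unfolding spanB_def by blast
      qed
      then have "y = 0" by (rule cf_eq0)
      then show "y \<in> {0}" by simp
    qed
    show "{0} \<subseteq> spanB F \<inter> ?C" using subgrp_spanB[of F] by (simp add: subgrp_def cf_zero)
  qed
  fix x
  define x1 where "x1 = (\<Sum>b\<in>F. zsc (cf x b) b)"
  have c1: "cf x1 b = (if b \<in> F then cf x b else 0)" for b
    unfolding x1_def using cf_lincomb[OF assms] by simp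
  have "x1 \<in> spanB F" by (auto simp: spanB_def c1 split: if_splits)
  moreover have "x - x1 \<in> ?C" by (simp add: cf_diff c1)
  ultimately show "\<exists>a\<in>spanB F. \<exists>c\<in>?C. x = a + c" by force
qed

lemma finite_rank_spanB: assumes "finite F" shows "finite_rank (spanB F)"
  unfolding finite_rank_def
proof (intro exI allI impI)
  fix F' assume sub: "F' \<subseteq> spanB F" and ind: "z_independent F'"
  show "card F' \<le> card F"
  proof (rule ccontr)
    assume "\<not> card F' \<le> card F"
    then have "card F < card F'" by simp
    moreover have fF': "finite F'" using ind z_independent_def by blast
    ultimately obtain n where n: "\<exists>i\<in>F'. n i \<noteq> 0" "\<forall>j\<in>F. (\<Sum>i\<in>F'. n i * cf i j) = 0"
      using int_dependence[OF assms] by blast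
    have "(\<Sum>i\<in>F'. zsc (n i) i) = 0"
    proof (rule cf_eq0)
      fix b
      show "cf (\<Sum>i\<in>F'. zsc (n i) i) b = 0"
      proof (cases "b \<in> F")
        case True then show ?thesis using n(2) by (simp add: cf_sum cf_zsc)
      next
        case False
        then have "\<forall>i\<in>F'. cf i b = 0" using sub by (auto simp: spanB_def)
        then show ?thesis by (simp add: cf_sum cf_zsc)
      qed
    qed
    then show False using ind n(1) unfolding z_independent_def by blast
  qed
qed

lemma summand_pure: fixes A :: "'a set" assumes "subgrp A" "direct_summand A" "zsc m x \<in> A" "m \<noteq> 0"
  shows "x \<in> A"
proof -
  obtain C where C: "subgrp C" "A \<inter> C = {0}" "\<forall>x. \<exists>a\<in>A. \<exists>c\<in>C. x = a + c"
    using assms(2) unfolding direct_summand_def by blast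
  obtain a c where ac: "a \<in> A" "c \<in> C" "x = a + c" using C(3) by blast
  have "zsc m c = zsc m x - zsc m a" using ac by (simp add: zsc_add_right)
  then have "zsc m c \<in> A" using assms subgrp_zsc[OF assms(1) ac(1)] subgrp_diff by metis
  moreover have "zsc m c \<in> C" using subgrp_zsc[OF C(1) ac(2)] .
  ultimately have "zsc m c = 0" using C(2) by blast
  then have "c = 0" using torsion_free assms(4) by blast
  then show ?thesis using ac by simp
qed

lemma finite_rank_in_span: assumes "finite_rank A"
  shows "\<exists>F. finite F \<and> F \<subseteq> B \<and> A \<subseteq> spanB F"
proof -
  obtain N where N: "\<forall>F. F \<subseteq> A \<longrightarrow> z_independent F \<longrightarrow> card F \<le> N"
    using assms finite_rank_def by blast
  let ?P = "\<lambda>M. M \<subseteq> A \<and> z_independent M"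
  have "?P {}" by (simp add: z_independent_def)
  moreover have "\<forall>M. ?P M \<longrightarrow> card M < Suc N" using N by (simp add: less_Suc_eq_le)
  ultimately obtain M where M: "?P M" "\<forall>M'. ?P M' \<longrightarrow> card M' \<le> card M"
    using Lattices_Big.ex_has_greatest_nat[of ?P "{}" card "Suc N"] by blast
  have fM: "finite M" using M(1) z_independent_def by blast
  define F where "F = (\<Union>y\<in>M. {b. cf y b \<noteq> 0})"
  have fF: "finite F" unfolding F_def using fM cf_finite by auto
  have FB: "F \<subseteq> B" unfolding F_def using cf_B by auto
  have "A \<subseteq> spanB F"
  proof
    fix x assume xA: "x \<in> A"
    show "x \<in> spanB F"
    proof (cases "x \<in> M")
      case True then show ?thesis by (auto simp: spanB_def F_def)
    next
      case False
      have "card (insert x M) > card M" using False fM by simp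
      have "\<not> z_independent (insert x M)"
      proof
        assume "z_independent (insert x M)"
        moreover have "insert x M \<subseteq> A" using M(1) xA by blast
        ultimately have "card (insert x M) \<le> card M" using M(2) by blast
        then show False using \<open>card (insert x M) > card M\<close> by simp
      qed
      then obtain c where c: "(\<Sum>b\<in>insert x M. zsc (c b) b) = 0" "\<exists>b\<in>insert x M. c b \<noteq> 0"
        using fM unfolding z_independent_def by auto
      have sum: "zsc (c x) x + (\<Sum>b\<in>M. zsc (c b) b) = 0" using c(1) False fM by simp
      have "c x \<noteq> 0"
      proof
        assume "c x = 0"
        then have "(\<Sum>b\<in>M. zsc (c b) b) = 0" "\<exists>b\<in>M. c b \<noteq> 0" using sum c(2) by auto
        then show False using M(1) unfolding z_independent_def by blast
      qed
      show ?thesis unfolding spanB_def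
      proof (intro CollectI allI impI)
        fix b assume bx: "cf x b \<noteq> 0"
        show "b \<in> F"
        proof (rule ccontr)
          assume "b \<notin> F"
          then have "\<forall>y\<in>M. cf y b = 0" unfolding F_def by auto
          then have "cf (\<Sum>b\<in>M. zsc (c b) b) b = 0" by (simp add: cf_sum cf_zsc)
          then have "c x * cf x b = 0" using arg_cong[OF sum, of "\<lambda>y. cf y b"]
            by (simp add: cf_add cf_zsc cf_zero)
          then show False using \<open>c x \<noteq> 0\<close> bx by simp
        qed
      qed
    qed
  qed
  then show ?thesis using fF FB by blast
qed

end


definition lin :: "(nat \<Rightarrow> 'a::ab_group_add) \<Rightarrow> nat \<Rightarrow> (nat \<Rightarrow> int) \<Rightarrow> 'a" where
  "lin E r n = (\<Sum>i<r. zsc (n i) (E i))"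

definition frame :: "'a::ab_group_add set \<Rightarrow> nat \<Rightarrow> (nat \<Rightarrow> 'a) \<Rightarrow> (nat \<Rightarrow> 'a \<Rightarrow> int) \<Rightarrow> bool" where
  "frame X r E L \<longleftrightarrow> (\<forall>i<r. E i \<in> X) \<and> (\<forall>i<r. hom (L i)) \<and>
      (\<forall>i<r. \<forall>j<r. L i (E j) = (if i = j then 1 else 0))"

definition rel :: "(nat \<Rightarrow> 'a::ab_group_add) \<Rightarrow> (nat \<Rightarrow> 'a) \<Rightarrow> nat \<Rightarrow> 'a \<Rightarrow> 'a \<Rightarrow> bool" where
  "rel E E' r x y \<longleftrightarrow> (\<exists>n. x = lin E r n \<and> y = lin E' r n)"

definition good :: "'a::ab_group_add set \<Rightarrow> bool" where
  "good X \<longleftrightarrow> subgrp X \<and> (\<forall>m x. m \<noteq> 0 \<longrightarrow> zsc m x \<in> X \<longrightarrow> x \<in> X)"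

lemma rel_sym: "rel E E' r x y \<longleftrightarrow> rel E' E r y x" unfolding rel_def by blast

lemma L_lin: assumes "frame X r E L" "i < r" shows "L i (lin E r n) = n i"
proof -
  have h: "hom (L i)" using assms frame_def by blast
  have "L i (lin E r n) = (\<Sum>j<r. n j * L i (E j))"
    unfolding lin_def by (simp add: hom_sum[OF h] hom_zsc[OF h])
  also have "\<dots> = (\<Sum>j<r. if j = i then n j else 0)"
    by (rule sum.cong) (use assms in \<open>auto simp: frame_def\<close>)
  also have "\<dots> = n i" using assms(2) by (simp add: sum.delta)
  finally show ?thesis .
qed

lemma lin_eq_iff: assumes "frame X r E L" shows "lin E r n = lin E r m \<longleftrightarrow> (\<forall>i<r. n i = m i)"
proof
  assume "lin E r n = lin E r m"
  then show "\<forall>i<r. n i = m i" using L_lin[OF assms] by metis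
next
  assume "\<forall>i<r. n i = m i"
  then show "lin E r n = lin E r m" unfolding lin_def by (intro sum.cong) auto
qed

lemma lin_add: "lin E r n + lin E r m = lin E r (\<lambda>i. n i + m i)"
  unfolding lin_def by (simp add: zsc_add sum.distrib)

lemma lin_neg: "- lin E r n = lin E r (\<lambda>i. - n i)"
  unfolding lin_def by (simp add: zsc_neg sum_negf)

lemma lin_zero: "lin E r (\<lambda>_. 0) = 0" unfolding lin_def by simp

lemma lin_in: "subgrp X \<Longrightarrow> (\<forall>i<r. E i \<in> X) \<Longrightarrow> lin E r n \<in> X"
  unfolding lin_def by (rule subgrp_sum) (auto intro: subgrp_zsc)

lemma lin_Suc: "lin E (Suc r) n = lin E r n + zsc (n r) (E r)"
  unfolding lin_def by simp

lemma lin_cong: "(\<And>i. i < r \<Longrightarrow> E i = E2 i) \<Longrightarrow> (\<And>i. i < r \<Longrightarrow> n i = n2 i) \<Longrightarrow> lin E r n = lin E2 r n2"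
  unfolding lin_def by (rule sum.cong) auto

lemma rel_tm:
  "(\<forall>v\<in>tm_vars t. rel E E' r (\<sigma> v) (\<tau> v)) \<Longrightarrow> (\<forall>c\<in>tm_consts t. rel E E' r c c) \<Longrightarrow>
   rel E E' r (tm_eval \<sigma> t) (tm_eval \<tau> t)"
proof (induction t)
  case Zero then show ?case unfolding rel_def using lin_zero by (metis tm_eval.simps(3))
next
  case (Plus s t)
  then obtain n m where "tm_eval \<sigma> s = lin E r n" "tm_eval \<tau> s = lin E' r n"
    "tm_eval \<sigma> t = lin E r m" "tm_eval \<tau> t = lin E' r m" unfolding rel_def by auto
  then show ?case unfolding rel_def by (auto simp: lin_add)
next
  case (Minus t)
  then obtain n where "tm_eval \<sigma> t = lin E r n" "tm_eval \<tau> t = lin E' r n" unfolding rel_def by auto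
  then show ?case unfolding rel_def by (auto simp: lin_neg)
qed auto

lemma frame_extend:
  assumes "frame X r E L" "e \<in> X" "\<forall>i<r. L i e = 0" "hom \<mu>" "\<mu> e = 1"
  shows "frame X (Suc r) (E(r:=e)) (L(r := (\<lambda>x. \<mu> x - (\<Sum>j<r. \<mu> (E j) * L j x))))"
proof -
  let ?\<mu> = "\<lambda>x. \<mu> x - (\<Sum>j<r. \<mu> (E j) * L j x)"
  have hL: "\<forall>i<r. hom (L i)" using assms(1) frame_def by blast
  have h: "hom ?\<mu>" unfolding hom_def
  proof (intro allI)
    fix x y
    have "(\<Sum>j<r. \<mu> (E j) * L j (x + y)) = (\<Sum>j<r. \<mu> (E j) * L j x) + (\<Sum>j<r. \<mu> (E j) * L j y)"
      by (simp add: hom_add hL distrib_left sum.distrib)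
    then show "?\<mu> (x + y) = ?\<mu> x + ?\<mu> y" using hom_add[OF assms(4)] by simp
  qed
  have m0: "?\<mu> (E i) = 0" if "i < r" for i
  proof -
    have "(\<Sum>j<r. \<mu> (E j) * L j (E i)) = (\<Sum>j<r. if j = i then \<mu> (E j) else 0)"
      by (rule sum.cong) (use assms(1) that in \<open>auto simp: frame_def\<close>)
    then show ?thesis using that by (simp add: sum.delta)
  qed
  have m1: "?\<mu> e = 1" using assms(3,5) by simp
  show ?thesis unfolding frame_def
  proof (intro conjI allI impI)
    fix i assume "i < Suc r" then show "(E(r := e)) i \<in> X" using assms(1,2) by (cases "i = r") (auto simp: frame_def)
  next
    fix i assume "i < Suc r" then show "hom ((L(r := ?\<mu>)) i)" using hL h by (cases "i = r") auto
  next
    fix i j assume ij: "i < Suc r" "j < Suc r"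
    show "(L(r := ?\<mu>)) i ((E(r := e)) j) = (if i = j then 1 else 0)"
      using ij assms(1,3) m0 m1 by (cases "i = r"; cases "j = r") (auto simp: frame_def)
  qed
qed

context fb begin

definition room :: "'a set \<Rightarrow> nat \<Rightarrow> bool" where
  "room X k \<longleftrightarrow> (\<exists>F. finite F \<and> F \<subseteq> B \<and> F \<subseteq> X \<and> k \<le> card F)"

lemma room_mono: "room X k \<Longrightarrow> k' \<le> k \<Longrightarrow> room X k'"
  unfolding room_def by (meson order_trans)

lemma fresh:
  assumes "frame Y r E L" "good Y" "room Y (Suc r)"
  shows "\<exists>e\<in>Y. (\<forall>i<r. L i e = 0) \<and> (\<exists>\<mu>. hom \<mu> \<and> \<mu> e = 1)"
proof -
  obtain F where F: "finite F" "F \<subseteq> B" "F \<subseteq> Y" "Suc r \<le> card F" using assms(3) unfolding room_def by blast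
  have "card {..<r} < card F" using F(4) by simp
  then obtain n where n: "\<exists>b\<in>F. n b \<noteq> 0" "\<forall>i\<in>{..<r}. (\<Sum>b\<in>F. n b * L i b) = 0"
    using int_dependence[of "{..<r}" F "\<lambda>b i. L i b"] F(1) by auto
  define y where "y = (\<Sum>b\<in>F. zsc (n b) b)"
  have sY: "subgrp Y" using assms(2) good_def by blast
  have yY: "y \<in> Y" unfolding y_def using F(3) by (intro subgrp_sum[OF sY] subgrp_zsc[OF sY]) auto
  have Ly: "L i y = 0" if "i < r" for i
  proof -
    have "hom (L i)" using assms(1) that frame_def by blast
    then have "L i y = (\<Sum>b\<in>F. n b * L i b)" unfolding y_def by (simp add: hom_sum hom_zsc)
    then show ?thesis using n(2) that by simp
  qed
  obtain b0 where b0: "b0 \<in> F" "n b0 \<noteq> 0" using n(1) by blast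
  have "cf y b0 = n b0" unfolding y_def using cf_lincomb[OF F(1,2)] b0 by simp
  then have "y \<noteq> 0" using b0 cf_zero by auto
  then obtain m e \<mu> where me: "m \<noteq> 0" "y = zsc m e" "hom \<mu>" "\<mu> e = 1" using core by blast
  have eY: "e \<in> Y" using assms(2) me yY unfolding good_def by blast
  have "L i e = 0" if "i < r" for i
  proof -
    have "hom (L i)" using assms(1) that frame_def by blast
    then have "m * L i e = 0" using Ly[OF that] me(2) hom_zsc by metis
    then show ?thesis using me(1) by simp
  qed
  then show ?thesis using eY me by blast
qed

lemma decompose:
  fixes X :: "'a set"
  assumes "frame X r E L" "good X" "a \<in> X"
  shows "a = lin E r (\<lambda>i. L i a) \<or>
    (\<exists>m e \<mu>. m \<noteq> 0 \<and> e \<in> X \<and> (\<forall>i<r. L i e = 0) \<and> hom \<mu> \<and> \<mu> e = 1 \<and> a = lin E r (\<lambda>i. L i a) + zsc m e)"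
proof (cases "a = lin E r (\<lambda>i. L i a)")
  case False
  define p where "p = lin E r (\<lambda>i. L i a)"
  have sX: "subgrp X" using assms(2) good_def by blast
  have pX: "p \<in> X" unfolding p_def using assms(1) by (intro lin_in[OF sX]) (auto simp: frame_def)
  have "a - p \<noteq> 0" using False p_def by simp
  then obtain m e \<mu> where me: "m \<noteq> 0" "a - p = zsc m e" "hom \<mu>" "\<mu> e = 1" using core by blast
  have "a - p \<in> X" using sX pX assms(3) subgrp_diff by blast
  then have eX: "e \<in> X" using assms(2) me unfolding good_def by metis
  have "L i e = 0" if "i < r" for i
  proof -
    have h: "hom (L i)" using assms(1) that frame_def by blast
    have "L i (a - p) = 0" using hom_diff[OF h] L_lin[OF assms(1) that] p_def by simp
    then have "m * L i e = 0" using me(2) hom_zsc[OF h] by metis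
    then show ?thesis using me(1) by simp
  qed
  moreover have "a = p + zsc m e" using me(2) by (simp add: algebra_simps flip: me(2))
  ultimately show ?thesis using me eX unfolding p_def
    by (intro disjI2 exI[of _ m] exI[of _ e] exI[of _ \<mu>]) auto
qed simp

lemma ext:
  fixes X Y :: "'a set"
  assumes fX: "frame X r E L" and fY: "frame Y r E' L'" and gX: "good X" and gY: "good Y"
    and rY: "room Y (Suc r)" and aX: "a \<in> X"
  shows "\<exists>b\<in>Y. \<exists>r2 E2 L2 E2' L2'. r2 \<le> Suc r \<and> frame X r2 E2 L2 \<and> frame Y r2 E2' L2' \<and>
     rel E2 E2' r2 a b \<and> (\<forall>x y. rel E E' r x y \<longrightarrow> rel E2 E2' r2 x y)"
proof -
  have sY: "subgrp Y" using gY good_def by blast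
  have EY: "\<forall>i<r. E' i \<in> Y" using fY frame_def by blast
  from decompose[OF fX gX aX] show ?thesis
  proof
    assume a: "a = lin E r (\<lambda>i. L i a)"
    have "lin E' r (\<lambda>i. L i a) \<in> Y" by (rule lin_in[OF sY EY])
    moreover have "rel E E' r a (lin E' r (\<lambda>i. L i a))" unfolding rel_def using a by blast
    ultimately show ?thesis using fX fY
      by (intro bexI[where x="lin E' r (\<lambda>i. L i a)"] exI[where x=r] exI[where x=E] exI[where x=L]
          exI[where x=E'] exI[where x=L']) auto
  next
    assume "\<exists>m e \<mu>. m \<noteq> 0 \<and> e \<in> X \<and> (\<forall>i<r. L i e = 0) \<and> hom \<mu> \<and> \<mu> e = 1 \<and> a = lin E r (\<lambda>i. L i a) + zsc m e"
    then obtain m e \<mu> where me: "m \<noteq> 0" "e \<in> X" "\<forall>i<r. L i e = 0" "hom \<mu>" "\<mu> e = 1"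
        "a = lin E r (\<lambda>i. L i a) + zsc m e" by blast
    obtain e' \<mu>' where e': "e' \<in> Y" "\<forall>i<r. L' i e' = 0" "hom \<mu>'" "\<mu>' e' = 1"
      using fresh[OF fY gY rY] by blast
    define E2 where "E2 = E(r := e)"
    define E2' where "E2' = E'(r := e')"
    have f2: "frame X (Suc r) E2 (L(r := (\<lambda>x. \<mu> x - (\<Sum>j<r. \<mu> (E j) * L j x))))"
      unfolding E2_def by (rule frame_extend[OF fX me(2-5)])
    have f2': "frame Y (Suc r) E2' (L'(r := (\<lambda>x. \<mu>' x - (\<Sum>j<r. \<mu>' (E' j) * L' j x))))"
      unfolding E2'_def by (rule frame_extend[OF fY e'])
    define n where "n = (\<lambda>i. L i a)(r := m)"
    define b where "b = lin E' r (\<lambda>i. L i a) + zsc m e'"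
    have bY: "b \<in> Y" unfolding b_def using sY e'(1) lin_in[OF sY EY] subgrp_zsc[OF sY]
      unfolding subgrp_def by blast
    have l1: "lin E2 (Suc r) n = lin E r (\<lambda>i. L i a) + zsc m e"
      unfolding lin_Suc by (simp add: n_def E2_def, rule lin_cong, auto)
    have l2: "lin E2' (Suc r) n = b"
      unfolding lin_Suc b_def by (simp add: n_def E2'_def, rule lin_cong, auto)
    have an: "a = lin E2 (Suc r) n" by (rule trans[OF me(6) l1[symmetric]])
    have "rel E2 E2' (Suc r) a b" unfolding rel_def
      by (intro exI[of _ n] conjI) (fact an, fact l2[symmetric])
    moreover have "rel E2 E2' (Suc r) x y" if r0: "rel E E' r x y" for x y
    proof -
      obtain k where k: "x = lin E r k" "y = lin E' r k" using r0 unfolding rel_def by blast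
      have "lin E2 (Suc r) (k(r := 0)) = x" unfolding lin_Suc k by (simp add: E2_def, rule lin_cong, auto)
      moreover have "lin E2' (Suc r) (k(r := 0)) = y" unfolding lin_Suc k by (simp add: E2'_def, rule lin_cong, auto)
      ultimately show ?thesis unfolding rel_def by (intro exI[of _ "k(r := 0)"]) simp
    qed
    ultimately show ?thesis using bY f2 f2'
      by (intro bexI[where x=b] exI[where x="Suc r"] exI[where x=E2] exI[where x="L(r := (\<lambda>x. \<mu> x - (\<Sum>j<r. \<mu> (E j) * L j x)))"]
          exI[where x=E2'] exI[where x="L'(r := (\<lambda>x. \<mu>' x - (\<Sum>j<r. \<mu>' (E' j) * L' j x)))"]) auto
  qed
qed

end


primrec depth :: "'a fm \<Rightarrow> nat" where
  "depth (Eq s t) = 0" | "depth FFalse = 0" | "depth (Neg p) = depth p"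
| "depth (Conj p q) = max (depth p) (depth q)" | "depth (Disj p q) = max (depth p) (depth q)"
| "depth (Imp p q) = max (depth p) (depth q)" | "depth (Ex n p) = Suc (depth p)"
| "depth (All n p) = Suc (depth p)"

lemma finite_tm_consts: "finite (tm_consts t)" by (induction t) auto
lemma finite_fconsts: "finite (fconsts p)" by (induction p) (auto simp: finite_tm_consts)

context fb begin

lemma ef:
  fixes X Y :: "'a set"
  shows "frame X r E L \<Longrightarrow> frame Y r E' L' \<Longrightarrow> good X \<Longrightarrow> good Y \<Longrightarrow>
    room X (r + depth \<phi>) \<Longrightarrow> room Y (r + depth \<phi>) \<Longrightarrow>
    (\<forall>v\<in>fvars \<phi>. rel E E' r (\<sigma> v) (\<tau> v)) \<Longrightarrow> (\<forall>c\<in>fconsts \<phi>. rel E E' r c c) \<Longrightarrow>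
    sat X \<sigma> \<phi> = sat Y \<tau> \<phi>"
proof (induction \<phi> arbitrary: r E L E' L' \<sigma> \<tau>)
  case (Eq s t)
  obtain ns where ns: "tm_eval \<sigma> s = lin E r ns" "tm_eval \<tau> s = lin E' r ns"
    using rel_tm[of s E E' r \<sigma> \<tau>] Eq.prems(7,8) unfolding rel_def by auto
  obtain nt where nt: "tm_eval \<sigma> t = lin E r nt" "tm_eval \<tau> t = lin E' r nt"
    using rel_tm[of t E E' r \<sigma> \<tau>] Eq.prems(7,8) unfolding rel_def by auto
  show ?case using lin_eq_iff[OF Eq.prems(1)] lin_eq_iff[OF Eq.prems(2)] ns nt by simp
next
  case FFalse then show ?case by simp
next
  case (Neg p) then show ?case by simp
next
  case (Conj p q)
  have "sat X \<sigma> p = sat Y \<tau> p"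
    by (rule Conj.IH(1)) (use Conj.prems in \<open>auto intro: room_mono\<close>)
  moreover have "sat X \<sigma> q = sat Y \<tau> q"
    by (rule Conj.IH(2)) (use Conj.prems in \<open>auto intro: room_mono\<close>)
  ultimately show ?case by simp
next
  case (Disj p q)
  have "sat X \<sigma> p = sat Y \<tau> p"
    by (rule Disj.IH(1)) (use Disj.prems in \<open>auto intro: room_mono\<close>)
  moreover have "sat X \<sigma> q = sat Y \<tau> q"
    by (rule Disj.IH(2)) (use Disj.prems in \<open>auto intro: room_mono\<close>)
  ultimately show ?case by simp
next
  case (Imp p q)
  have "sat X \<sigma> p = sat Y \<tau> p"
    by (rule Imp.IH(1)) (use Imp.prems in \<open>auto intro: room_mono\<close>)
  moreover have "sat X \<sigma> q = sat Y \<tau> q"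
    by (rule Imp.IH(2)) (use Imp.prems in \<open>auto intro: room_mono\<close>)
  ultimately show ?case by simp
next
  case (Ex n p)
  note pr = Ex.prems
  have fw: "\<exists>b\<in>Y. sat X (\<sigma>(n := a)) p = sat Y (\<tau>(n := b)) p" if aX: "a \<in> X" for a
  proof -
    have rY: "room Y (Suc r)" using pr(6) by (auto intro: room_mono)
    obtain b r2 E2 L2 E2' L2' where b: "b \<in> Y" "r2 \<le> Suc r" "frame X r2 E2 L2" "frame Y r2 E2' L2'"
      "rel E2 E2' r2 a b" "\<forall>x y. rel E E' r x y \<longrightarrow> rel E2 E2' r2 x y"
      using ext[OF pr(1,2,3,4) rY aX] by blast
    have "sat X (\<sigma>(n := a)) p = sat Y (\<tau>(n := b)) p"
    proof (rule Ex.IH[OF b(3,4) pr(3,4)])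
      show "room X (r2 + depth p)" using pr(5) b(2) by (auto intro: room_mono)
      show "room Y (r2 + depth p)" using pr(6) b(2) by (auto intro: room_mono)
      show "\<forall>v\<in>fvars p. rel E2 E2' r2 ((\<sigma>(n := a)) v) ((\<tau>(n := b)) v)"
        using pr(7) b(5,6) by auto
      show "\<forall>c\<in>fconsts p. rel E2 E2' r2 c c" using pr(8) b(6) by auto
    qed
    then show ?thesis using b(1) by blast
  qed
  have bw: "\<exists>a\<in>X. sat X (\<sigma>(n := a)) p = sat Y (\<tau>(n := b)) p" if bY: "b \<in> Y" for b
  proof -
    have rX: "room X (Suc r)" using pr(5) by (auto intro: room_mono)
    obtain a r2 E2 L2 E2' L2' where a: "a \<in> X" "r2 \<le> Suc r" "frame Y r2 E2 L2" "frame X r2 E2' L2'"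
      "rel E2 E2' r2 b a" "\<forall>x y. rel E' E r x y \<longrightarrow> rel E2 E2' r2 x y"
      using ext[OF pr(2,1,4,3) rX bY] by blast
    have "sat X (\<sigma>(n := a)) p = sat Y (\<tau>(n := b)) p"
    proof (rule Ex.IH[OF a(4,3) pr(3,4)])
      show "room X (r2 + depth p)" using pr(5) a(2) by (auto intro: room_mono)
      show "room Y (r2 + depth p)" using pr(6) a(2) by (auto intro: room_mono)
      show "\<forall>v\<in>fvars p. rel E2' E2 r2 ((\<sigma>(n := a)) v) ((\<tau>(n := b)) v)"
        using pr(7) a(5,6) by (auto simp: rel_sym[of E2'] rel_sym[of E])
      show "\<forall>c\<in>fconsts p. rel E2' E2 r2 c c" using pr(8) a(6) by (auto simp: rel_sym[of E2'] rel_sym[of E])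
    qed
    then show ?thesis using a(1) by blast
  qed
  show ?case using fw bw by auto
next
  case (All n p)
  note pr = All.prems
  have fw: "\<exists>b\<in>Y. sat X (\<sigma>(n := a)) p = sat Y (\<tau>(n := b)) p" if aX: "a \<in> X" for a
  proof -
    have rY: "room Y (Suc r)" using pr(6) by (auto intro: room_mono)
    obtain b r2 E2 L2 E2' L2' where b: "b \<in> Y" "r2 \<le> Suc r" "frame X r2 E2 L2" "frame Y r2 E2' L2'"
      "rel E2 E2' r2 a b" "\<forall>x y. rel E E' r x y \<longrightarrow> rel E2 E2' r2 x y"
      using ext[OF pr(1,2,3,4) rY aX] by blast
    have "sat X (\<sigma>(n := a)) p = sat Y (\<tau>(n := b)) p"
    proof (rule All.IH[OF b(3,4) pr(3,4)])
      show "room X (r2 + depth p)" using pr(5) b(2) by (auto intro: room_mono)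
      show "room Y (r2 + depth p)" using pr(6) b(2) by (auto intro: room_mono)
      show "\<forall>v\<in>fvars p. rel E2 E2' r2 ((\<sigma>(n := a)) v) ((\<tau>(n := b)) v)"
        using pr(7) b(5,6) by auto
      show "\<forall>c\<in>fconsts p. rel E2 E2' r2 c c" using pr(8) b(6) by auto
    qed
    then show ?thesis using b(1) by blast
  qed
  have bw: "\<exists>a\<in>X. sat X (\<sigma>(n := a)) p = sat Y (\<tau>(n := b)) p" if bY: "b \<in> Y" for b
  proof -
    have rX: "room X (Suc r)" using pr(5) by (auto intro: room_mono)
    obtain a r2 E2 L2 E2' L2' where a: "a \<in> X" "r2 \<le> Suc r" "frame Y r2 E2 L2" "frame X r2 E2' L2'"
      "rel E2 E2' r2 b a" "\<forall>x y. rel E' E r x y \<longrightarrow> rel E2 E2' r2 x y"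
      using ext[OF pr(2,1,4,3) rX bY] by blast
    have "sat X (\<sigma>(n := a)) p = sat Y (\<tau>(n := b)) p"
    proof (rule All.IH[OF a(4,3) pr(3,4)])
      show "room X (r2 + depth p)" using pr(5) a(2) by (auto intro: room_mono)
      show "room Y (r2 + depth p)" using pr(6) a(2) by (auto intro: room_mono)
      show "\<forall>v\<in>fvars p. rel E2' E2 r2 ((\<sigma>(n := a)) v) ((\<tau>(n := b)) v)"
        using pr(7) a(5,6) by (auto simp: rel_sym[of E2'] rel_sym[of E])
      show "\<forall>c\<in>fconsts p. rel E2' E2 r2 c c" using pr(8) a(6) by (auto simp: rel_sym[of E2'] rel_sym[of E])
    qed
    then show ?thesis using a(1) by blast
  qed
  show ?case using fw bw by auto
qed

end


context fb begin

lemma spanB_sub: assumes "subgrp X" "finite F0" "F0 \<subseteq> X" shows "spanB F0 \<subseteq> X"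
proof
  fix x assume "x \<in> spanB F0"
  then have "{b. cf x b \<noteq> 0} \<subseteq> F0" unfolding spanB_def by blast
  then have "x = (\<Sum>b\<in>F0. zsc (cf x b) b)" by (rule cf_sumT[OF assms(2)])
  also have "\<dots> \<in> X" using assms by (intro subgrp_sum subgrp_zsc) auto
  finally show "x \<in> X" .
qed

lemma good_UNIV: "good UNIV" unfolding good_def subgrp_def by simp

lemma key:
  assumes infB: "infinite B" and fv: "fvars \<theta> = {}"
  shows "\<exists>F0. finite F0 \<and> F0 \<subseteq> B \<and> fconsts \<theta> \<subseteq> spanB F0 \<and>
     (\<forall>j. good j \<longrightarrow> F0 \<subseteq> j \<longrightarrow> (sat UNIV (\<lambda>_. 0) \<theta> \<longleftrightarrow> sat j (\<lambda>_. 0) \<theta>))"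
proof -
  define G where "G = (\<Union>c\<in>fconsts \<theta>. {b. cf c b \<noteq> 0})"
  have fG: "finite G" unfolding G_def using finite_fconsts cf_finite by auto
  have GB: "G \<subseteq> B" unfolding G_def using cf_B by auto
  define r where "r = card G"
  obtain H where H: "finite H" "card H = r + depth \<theta>" "H \<subseteq> B"
    using infinite_arbitrarily_large[OF infB] by blast
  define F0 where "F0 = G \<union> H"
  have fF0: "finite F0" "F0 \<subseteq> B" using fG H GB by (auto simp: F0_def)
  have "card H \<le> card F0" unfolding F0_def by (rule card_mono) (use fG H in auto)
  then have cardF0: "r + depth \<theta> \<le> card F0" using H(2) by simp
  obtain h where h: "bij_betw h {0..<r} G" using ex_bij_betw_nat_finite[OF fG] r_def by blast
  define L where "L i x = cf x (h i)" for i x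
  have hG: "h i \<in> G" if "i < r" for i using h that by (auto simp: bij_betw_def)
  have hinj: "h i = h j \<longleftrightarrow> i = j" if "i < r" "j < r" for i j
    using h that unfolding bij_betw_def inj_on_def by auto
  have frame: "frame X r h L" if "G \<subseteq> X" for X
    unfolding frame_def
  proof (intro conjI allI impI)
    fix i assume "i < r" then show "h i \<in> X" using hG that by blast
  next
    fix i show "hom (L i)" unfolding L_def by (rule hom_cf)
  next
    fix i j assume ij: "i < r" "j < r"
    have "h j \<in> B" using hG[OF ij(2)] GB by blast
    then show "L i (h j) = (if i = j then 1 else 0)"
      unfolding L_def using cf_basis hinj[OF ij] by auto
  qed
  have cst: "rel h h r c c" if "c \<in> fconsts \<theta>" for c
  proof -
    have "{b. cf c b \<noteq> 0} \<subseteq> G" unfolding G_def using that by blast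
    then have "c = (\<Sum>b\<in>G. zsc (cf c b) b)" by (rule cf_sumT[OF fG])
    also have "\<dots> = (\<Sum>i\<in>{0..<r}. zsc (cf c (h i)) (h i))"
      by (rule sum.reindex_bij_betw[OF h, symmetric])
    also have "\<dots> = lin h r (\<lambda>i. cf c (h i))" unfolding lin_def by (simp add: atLeast0LessThan)
    finally show ?thesis unfolding rel_def by blast
  qed
  have cs: "fconsts \<theta> \<subseteq> spanB F0"
    unfolding spanB_def F0_def G_def by blast
  have "sat UNIV (\<lambda>_. 0) \<theta> \<longleftrightarrow> sat j (\<lambda>_. 0) \<theta>" if gj: "good j" and Fj: "F0 \<subseteq> j" for j
  proof (rule ef[OF frame frame good_UNIV gj])
    show "G \<subseteq> UNIV" by simp
    show "G \<subseteq> j" using Fj F0_def by blast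
    obtain K where K: "finite K" "card K = r + depth \<theta>" "K \<subseteq> B"
      using infinite_arbitrarily_large[OF infB] by blast
    show "room UNIV (r + depth \<theta>)" unfolding room_def using K by auto
    show "room j (r + depth \<theta>)" unfolding room_def using fF0 Fj cardF0 by blast
    show "\<forall>v\<in>fvars \<theta>. rel h h r 0 0" using fv by simp
    show "\<forall>c\<in>fconsts \<theta>. rel h h r c c" using cst by blast
  qed
  then show ?thesis using fF0 cs by blast
qed

end

theorem mainTheorem13:
  assumes "free_abelian_infinite_rank TYPE('a::ab_group_add)"
  shows "has_lim_I {A::'a set. subgrp A \<and> finite_rank A \<and> direct_summand A} Th (Th UNIV)"
proof -
  obtain B :: "'a set" where B: "free_basis B" "infinite B"
    using assms unfolding free_abelian_infinite_rank_def by blast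
  interpret fb B by (unfold_locales) (rule B(1))
  define I where "I = {A::'a set. subgrp A \<and> finite_rank A \<and> direct_summand A}"
  have spanI: "spanB F \<in> I" if "finite F" "F \<subseteq> B" for F
    unfolding I_def using subgrp_spanB[of F] finite_rank_spanB[OF that(1)] summand_spanB[OF that] by blast
  have goodI: "good j" if jI: "j \<in> I" for j
  proof -
    have sj: "subgrp j" and dj: "direct_summand j" using jI unfolding I_def by auto
    show ?thesis unfolding good_def using sj summand_pure[OF sj dj] by blast
  qed
  have claimA: "\<exists>F0. finite F0 \<and> F0 \<subseteq> B \<and> (\<forall>j\<in>I. spanB F0 \<subseteq> j \<longrightarrow> (\<theta> \<in> Th j \<longleftrightarrow> \<theta> \<in> Th UNIV))"
    if fv: "fvars \<theta> = {}" for \<theta> :: "'a fm"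
  proof -
    obtain F0 where F0: "finite F0" "F0 \<subseteq> B" "fconsts \<theta> \<subseteq> spanB F0"
      "\<forall>j. good j \<longrightarrow> F0 \<subseteq> j \<longrightarrow> (sat UNIV (\<lambda>_. 0) \<theta> \<longleftrightarrow> sat j (\<lambda>_. 0) \<theta>)"
      using key[OF B(2) fv] by blast
    have "\<theta> \<in> Th j \<longleftrightarrow> \<theta> \<in> Th UNIV" if "j \<in> I" "spanB F0 \<subseteq> j" for j
    proof -
      have "F0 \<subseteq> j" using spanB_basis[OF F0(2)] that(2) by blast
      then have "sat UNIV (\<lambda>_. 0) \<theta> \<longleftrightarrow> sat j (\<lambda>_. 0) \<theta>" using F0(4) goodI[OF that(1)] by blast
      moreover have "fconsts \<theta> \<subseteq> j" using F0(3) that(2) by blast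
      ultimately have a: "sat UNIV (\<lambda>_. 0) \<theta> \<longleftrightarrow> sat j (\<lambda>_. 0) \<theta>" and b: "fconsts \<theta> \<subseteq> j" by blast+
      have "\<theta> \<in> Th j \<longleftrightarrow> sat j (\<lambda>_. 0) \<theta>" using fv b unfolding Th_def mem_Collect_eq by blast
      moreover have "\<theta> \<in> Th UNIV \<longleftrightarrow> sat UNIV (\<lambda>_. 0) \<theta>" using fv unfolding Th_def mem_Collect_eq by blast
      ultimately show ?thesis using a by blast
    qed
    then have "\<forall>j\<in>I. spanB F0 \<subseteq> j \<longrightarrow> (\<theta> \<in> Th j \<longleftrightarrow> \<theta> \<in> Th UNIV)" by blast
    then show ?thesis using F0(1,2) by blast
  qed
  have claimB: "\<exists>j\<in>I. i \<subseteq> j \<and> spanB F0 \<subseteq> j" if "i \<in> I" "finite F0" "F0 \<subseteq> B" for i F0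
  proof -
    have "finite_rank i" using that(1) unfolding I_def by blast
    then obtain F where F: "finite F" "F \<subseteq> B" "i \<subseteq> spanB F"
      using finite_rank_in_span by blast
    have j: "spanB (F \<union> F0) \<in> I" by (rule spanI) (use F that in auto)
    have "i \<subseteq> spanB (F \<union> F0)" by (rule order_trans[OF F(3) spanB_mono]) simp
    moreover have "spanB F0 \<subseteq> spanB (F \<union> F0)" by (rule spanB_mono) simp
    ultimately show ?thesis using j by blast
  qed
  have I0: "spanB {} \<in> I" by (rule spanI) auto
  have fvTh: "fvars \<theta> = {}" if "\<theta> \<in> Th j" for \<theta> :: "'a fm" and j using that unfolding Th_def by blast
  have sup: "limsup_I I Th = Th UNIV"
  proof
    show "limsup_I I Th \<subseteq> Th UNIV"
    proof
      fix \<theta> assume t: "\<theta> \<in> limsup_I I Th"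
      then have t': "\<forall>i\<in>I. \<exists>j\<in>I. i \<subseteq> j \<and> \<theta> \<in> Th j" unfolding limsup_I_def by simp
      obtain j0 where "j0 \<in> I" "\<theta> \<in> Th j0" using t'[rule_format, OF I0] by blast
      then have fv: "fvars \<theta> = {}" by (rule_tac fvTh)
      obtain F0 where F0: "finite F0" "F0 \<subseteq> B" "\<forall>j\<in>I. spanB F0 \<subseteq> j \<longrightarrow> (\<theta> \<in> Th j \<longleftrightarrow> \<theta> \<in> Th UNIV)"
        using claimA[OF fv] by blast
      obtain j where j: "j \<in> I" "spanB F0 \<subseteq> j" "\<theta> \<in> Th j"
        using t'[rule_format, OF spanI[OF F0(1,2)]] by blast
      show "\<theta> \<in> Th UNIV" using F0(3)[rule_format, OF j(1,2)] j(3) by simp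
    qed
    show "Th UNIV \<subseteq> limsup_I I Th"
    proof
      fix \<theta> assume t: "\<theta> \<in> Th (UNIV :: 'a set)"
      then have fv: "fvars \<theta> = {}" by (rule fvTh)
      obtain F0 where F0: "finite F0" "F0 \<subseteq> B" "\<forall>j\<in>I. spanB F0 \<subseteq> j \<longrightarrow> (\<theta> \<in> Th j \<longleftrightarrow> \<theta> \<in> Th UNIV)"
        using claimA[OF fv] by blast
      have "\<exists>j\<in>I. i \<subseteq> j \<and> \<theta> \<in> Th j" if iI: "i \<in> I" for i
      proof -
        obtain j where j: "j \<in> I" "i \<subseteq> j" "spanB F0 \<subseteq> j" using claimB[OF iI F0(1,2)] by blast
        have "\<theta> \<in> Th j" using F0(3)[rule_format, OF j(1,3)] t by simp
        then show ?thesis using j(1,2) by blast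
      qed
      then show "\<theta> \<in> limsup_I I Th" unfolding limsup_I_def by simp
    qed
  qed
  have inf: "liminf_I I Th = Th UNIV"
  proof
    show "liminf_I I Th \<subseteq> Th UNIV"
    proof
      fix \<theta> assume t: "\<theta> \<in> liminf_I I Th"
      then obtain i where i: "i \<in> I" "\<forall>j\<in>I. i \<subseteq> j \<longrightarrow> \<theta> \<in> Th j" unfolding liminf_I_def by blast
      have "\<theta> \<in> Th i" using i(2)[rule_format, OF i(1)] by simp
      then have fv: "fvars \<theta> = {}" by (rule fvTh)
      obtain F0 where F0: "finite F0" "F0 \<subseteq> B" "\<forall>j\<in>I. spanB F0 \<subseteq> j \<longrightarrow> (\<theta> \<in> Th j \<longleftrightarrow> \<theta> \<in> Th UNIV)"
        using claimA[OF fv] by blast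
      obtain j where j: "j \<in> I" "i \<subseteq> j" "spanB F0 \<subseteq> j" using claimB[OF i(1) F0(1,2)] by blast
      have "\<theta> \<in> Th j" using i(2)[rule_format, OF j(1,2)] .
      then show "\<theta> \<in> Th UNIV" using F0(3)[rule_format, OF j(1,3)] by simp
    qed
    show "Th UNIV \<subseteq> liminf_I I Th"
    proof
      fix \<theta> assume t: "\<theta> \<in> Th (UNIV :: 'a set)"
      then have fv: "fvars \<theta> = {}" by (rule fvTh)
      obtain F0 where F0: "finite F0" "F0 \<subseteq> B" "\<forall>j\<in>I. spanB F0 \<subseteq> j \<longrightarrow> (\<theta> \<in> Th j \<longleftrightarrow> \<theta> \<in> Th UNIV)"
        using claimA[OF fv] by blast
      have "\<forall>j\<in>I. spanB F0 \<subseteq> j \<longrightarrow> \<theta> \<in> Th j" using F0(3) t by blast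
      then have "\<exists>i\<in>I. \<forall>j\<in>I. i \<subseteq> j \<longrightarrow> \<theta> \<in> Th j" using spanI[OF F0(1,2)] by blast
      then show "\<theta> \<in> liminf_I I Th" unfolding liminf_I_def by simp
    qed
  qed
  show ?thesis unfolding has_lim_I_def using sup inf unfolding I_def by simp
qed


end
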